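(* Let $G = K(n_1,n_2,\ldots,n_p)$ be a complete multipartite graph, where $p \ge 2$ and $0\le n_1\le n_2\le\cdots\le n_p$, and let $N=n_1+n_2+\cdots+n_p$. Then: (a) if $2n_p \le N$, the detour sequence of $G$ is $(N)_N$; (b) if $2n_p > N$, the detour sequence of $G$ is $(2(N-n_p))_{N-n_p},\ (2(N-n_p)+1)_{n_p}$.
   Context: All graphs are finite and simple. $K(n_1,\ldots,n_p)$ denotes the complete multipartite graph whose vertex set is partitioned into independent sets $V_1,\ldots,V_p$ with $|V_i|=n_i$, two vertices being adjacent if and only if they lie in different parts. The order of a path is its number of vertices. For a vertex $v$, $\tau(v)$ is the order of a longest path having $v$ as an endvertex; the detour sequence is the nondecreasing sequence of the values $\tau(v)$ over all vertices. The notation $(n)_k$ denotes the integer $n$ repeated $k$ times consecutively. *)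

theory Defs
  imports Main "HOL-Library.Multiset"
begin

(* A simple graph is given by a finite vertex set V and a symmetric irreflexive
   adjacency relation E. *)
definition is_path :: "'a set \<Rightarrow> ('a \<Rightarrow> 'a \<Rightarrow> bool) \<Rightarrow> 'a list \<Rightarrow> bool" where
  "is_path V E ps \<longleftrightarrow> ps \<noteq> [] \<and> set ps \<subseteq> V \<and> distinct ps \<and>
     (\<forall>i. Suc i < length ps \<longrightarrow> E (ps ! i) (ps ! Suc i))"

definition tau :: "'a set \<Rightarrow> ('a \<Rightarrow> 'a \<Rightarrow> bool) \<Rightarrow> 'a \<Rightarrow> nat" where
  "tau V E v = Max {length ps | ps. is_path V E ps \<and> (hd ps = v \<or> last ps = v)}"

definition detour_seq :: "'a set \<Rightarrow> ('a \<Rightarrow> 'a \<Rightarrow> bool) \<Rightarrow> nat list" where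
  "detour_seq V E = sorted_list_of_multiset (image_mset (tau V E) (mset_set V))"

(* Complete multipartite graph K(n 0, ..., n (p-1)): part i is {(i,j). j < n i} *)
definition cmp_vertices :: "nat \<Rightarrow> (nat \<Rightarrow> nat) \<Rightarrow> (nat \<times> nat) set" where
  "cmp_vertices p n = {(i, j). i < p \<and> j < n i}"

definition cmp_adj :: "nat \<times> nat \<Rightarrow> nat \<times> nat \<Rightarrow> bool" where
  "cmp_adj u v \<longleftrightarrow> fst u \<noteq> fst v"

end

theory Submission
  imports Defs
begin

lemma alt_count:
  "(\<forall>i. Suc i < length xs \<longrightarrow> \<not> (Q (xs!i) \<and> Q (xs ! Suc i))) \<Longrightarrow>
   length (filter Q xs) \<le> length (filter (\<lambda>x. \<not> Q x) xs) + (if xs \<noteq> [] \<and> \<not> Q (hd xs) then 0 else 1)"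
proof (induction xs)
  case Nil
  then show ?case by simp
next
  case (Cons x xs)
  have h: "\<forall>i. Suc i < length xs \<longrightarrow> \<not> (Q (xs!i) \<and> Q (xs ! Suc i))"
  proof (intro allI impI)
    fix i assume "Suc i < length xs"
    then show "\<not> (Q (xs!i) \<and> Q (xs ! Suc i))" using Cons.prems[rule_format, of "Suc i"] by simp
  qed
  note IH = Cons.IH[OF h]
  show ?case
  proof (cases xs)
    case Nil then show ?thesis by simp
  next
    case (Cons y ys)
    have "\<not> (Q x \<and> Q y)" using Cons.prems[rule_format, of 0] \<open>xs = y # ys\<close> by simp
    then show ?thesis using IH \<open>xs = y # ys\<close> by (auto split: if_splits)
  qed
qed

lemma is_path_rev:
  assumes "is_path V cmp_adj ps" shows "is_path V cmp_adj (rev ps)"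
  unfolding is_path_def
proof (intro conjI allI impI)
  show "rev ps \<noteq> []" "set (rev ps) \<subseteq> V" "distinct (rev ps)" using assms by (auto simp: is_path_def)
  fix i assume i: "Suc i < length (rev ps)"
  define j where "j = length ps - 2 - i"
  have j: "Suc j < length ps" using i by (simp add: j_def)
  have "cmp_adj (ps ! j) (ps ! Suc j)" using assms j by (auto simp: is_path_def)
  moreover have "rev ps ! i = ps ! Suc j" "rev ps ! Suc i = ps ! j"
    using i by (auto simp: rev_nth j_def Suc_diff_Suc numeral_2_eq_2)
  ultimately show "cmp_adj (rev ps ! i) (rev ps ! Suc i)" by (auto simp: cmp_adj_def)
qed

lemma tau_eq:
  assumes fin: "finite V" and ex: "is_path V cmp_adj ps0" "hd ps0 = v" "length ps0 = L"
    and ub: "\<And>ps. is_path V cmp_adj ps \<Longrightarrow> hd ps = v \<Longrightarrow> length ps \<le> L"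
  shows "tau V cmp_adj v = L"
proof -
  let ?S = "{length ps | ps. is_path V cmp_adj ps \<and> (hd ps = v \<or> last ps = v)}"
  have b: "x \<le> L" if "x \<in> ?S" for x
  proof -
    from \<open>x \<in> ?S\<close> obtain ps where ps: "x = length ps" "is_path V cmp_adj ps" "hd ps = v \<or> last ps = v" by blast
    show ?thesis
    proof (cases "hd ps = v")
      case True then show ?thesis using ub ps by auto
    next
      case False
      then have "last ps = v" using ps by auto
      moreover have "ps \<noteq> []" using ps by (auto simp: is_path_def)
      ultimately have "hd (rev ps) = v" by (simp add: hd_rev)
      then show ?thesis using ub[OF is_path_rev[OF ps(2)]] ps by simp
    qed
  qed
  have "L \<in> ?S" using ex by blast
  moreover have "finite ?S" using b by (meson finite_atMost finite_subset atMost_iff subsetI)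
  ultimately show ?thesis unfolding tau_def using b by (intro Max_eqI) auto
qed

definition bal :: "(nat \<times> nat) set \<Rightarrow> nat \<times> nat \<Rightarrow> bool" where
  "bal V v \<longleftrightarrow> (\<forall>k. 2 * card {u\<in>V. fst u = k} \<le> card V + (if fst v = k then 1 else 0))"

lemma ham:
  "finite V \<Longrightarrow> card V = m \<Longrightarrow> v \<in> V \<Longrightarrow> bal V v \<Longrightarrow>
   \<exists>ps. is_path V cmp_adj ps \<and> hd ps = v \<and> length ps = m"
proof (induction m arbitrary: V v)
  case 0
  then show ?case by auto
next
  case (Suc m)
  show ?case
  proof (cases "m = 0")
    case True
    then have "V = {v}" using Suc.prems by (metis One_nat_def card_1_singletonE singletonD)
    then show ?thesis using True by (intro exI[of _ "[v]"]) (auto simp: is_path_def)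
  next
    case False
    define V' where "V' = V - {v}"
    have fV': "finite V'" using Suc.prems V'_def by auto
    have cV': "card V' = m" using Suc.prems V'_def by auto
    define c where "c k = card {u\<in>V. fst u = k}" for k
    have bal: "2 * c k \<le> Suc m + (if fst v = k then 1 else 0)" for k
      using Suc.prems unfolding bal_def c_def by auto
    obtain w where w: "w \<in> V'" "fst w \<noteq> fst v"
      and wmax: "\<And>k. k \<noteq> fst v \<Longrightarrow> 2 * c k = Suc m \<Longrightarrow> fst w = k"
    proof (cases "\<exists>w\<in>V'. fst w \<noteq> fst v \<and> 2 * c (fst w) = Suc m")
      case True
      then obtain w where w: "w \<in> V'" "fst w \<noteq> fst v" "2 * c (fst w) = Suc m" by blast
      have "fst w = k" if k: "k \<noteq> fst v" "2 * c k = Suc m" for k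
      proof (rule ccontr)
        assume ne: "fst w \<noteq> k"
        let ?A = "{u\<in>V. fst u = k}" and ?B = "{u\<in>V. fst u = fst w}"
        have sub: "?A \<union> ?B \<union> {v} \<subseteq> V" using Suc.prems by auto
        have fA: "finite ?A" "finite ?B" using Suc.prems by auto
        have "card (?A \<union> ?B \<union> {v}) \<le> Suc m"
          using card_mono[OF Suc.prems(1) sub] Suc.prems(2) by simp
        moreover have d1: "?A \<inter> ?B = {}" using ne by auto
        have d2: "(?A \<union> ?B) \<inter> {v} = {}" using k(1) w(2) by auto
        have "card (?A \<union> ?B \<union> {v}) = card (?A \<union> ?B) + card {v}"
          by (rule card_Un_disjoint) (use fA d2 in auto)
        moreover have "card (?A \<union> ?B) = card ?A + card ?B"
          by (rule card_Un_disjoint) (use fA d1 in auto)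
        moreover have "c k = card ?A" "c (fst w) = card ?B" by (simp_all add: c_def)
        ultimately show False using k w(3) by simp
      qed
      then show ?thesis using that w by blast
    next
      case False
      have "\<exists>w\<in>V. fst w \<noteq> fst v"
      proof (rule ccontr)
        assume "\<not> ?thesis"
        then have "{u\<in>V. fst u = fst v} = V" by auto
        then have "c (fst v) = Suc m" using Suc.prems c_def by simp
        then show False using bal[of "fst v"] \<open>m \<noteq> 0\<close> by simp
      qed
      then obtain w where w: "w \<in> V'" "fst w \<noteq> fst v" unfolding V'_def by auto
      have "fst w = k" if k: "k \<noteq> fst v" "2 * c k = Suc m" for k
      proof -
        have "c k \<noteq> 0" using k by auto
        then obtain u where "u \<in> V" "fst u = k" unfolding c_def
          by (metis (mono_tags, lifting) Collect_empty_eq card.empty)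
        then have "u \<in> V'" "fst u \<noteq> fst v" using k V'_def by auto
        then show ?thesis using False k \<open>fst u = k\<close> by blast
      qed
      then show ?thesis using that w by blast
    qed
    have c': "card {u\<in>V'. fst u = k} = c k - (if fst v = k then 1 else 0)" for k
    proof -
      have "{u\<in>V'. fst u = k} = {u\<in>V. fst u = k} - {v}" using V'_def by auto
      then show ?thesis unfolding c_def using Suc.prems by (auto simp: card_Diff_singleton_if)
    qed
    have "bal V' w" unfolding bal_def
    proof
      fix k
      show "2 * card {u\<in>V'. fst u = k} \<le> card V' + (if fst w = k then 1 else 0)"
      proof (cases "fst v = k")
        case True
        then show ?thesis using c'[of k] bal[of k] cV' w(2) by auto
      next
        case False
        have e1: "card {u\<in>V'. fst u = k} = c k" using c'[of k] False by simp
        have e2: "2 * c k \<le> Suc m" using bal[of k] False by simp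
        have e3: "2 * c k = Suc m \<Longrightarrow> fst w = k" using wmax[of k] False by simp
        show ?thesis
        proof (cases "fst w = k")
          case True then show ?thesis using e1 e2 cV' by simp
        next
          case False
          then have "2 * c k \<noteq> Suc m" using e3 by blast
          then show ?thesis using e1 e2 cV' False by simp
        qed
      qed
    qed
    then obtain ps where ps: "is_path V' cmp_adj ps" "hd ps = w" "length ps = m"
      using Suc.IH[OF fV' cV' w(1)] by blast
    have "is_path V cmp_adj (v # ps)"
      unfolding is_path_def
    proof (intro conjI allI impI)
      show "v # ps \<noteq> []" by simp
      show "set (v # ps) \<subseteq> V" using ps(1) Suc.prems V'_def by (auto simp: is_path_def)
      show "distinct (v # ps)" using ps(1) V'_def by (auto simp: is_path_def)
      fix i assume i: "Suc i < length (v # ps)"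
      show "cmp_adj ((v # ps) ! i) ((v # ps) ! Suc i)"
      proof (cases i)
        case 0
        have "ps \<noteq> []" using ps by (auto simp: is_path_def)
        then show ?thesis using 0 ps(2) w(2) by (cases ps) (auto simp: cmp_adj_def)
      next
        case (Suc j)
        then show ?thesis using i ps(1) by (auto simp: is_path_def)
      qed
    qed
    then show ?thesis using ps by (intro exI[of _ "v # ps"]) auto
  qed
qed

lemma is_path_mono: "is_path W E ps \<Longrightarrow> W \<subseteq> V \<Longrightarrow> is_path V E ps"
  unfolding is_path_def by auto

lemma path_len_le: "is_path V E ps \<Longrightarrow> finite V \<Longrightarrow> length ps \<le> card V"
  unfolding is_path_def by (metis card_mono distinct_card)

lemma path_len_bip:
  assumes "is_path V cmp_adj ps" "finite V" "card {u\<in>V. fst u \<noteq> q} = m"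
  shows "length ps \<le> 2 * m + (if fst (hd ps) = q then 1 else 0)"
proof -
  let ?Q = "\<lambda>u. fst u = q"
  have nc: "\<forall>i. Suc i < length ps \<longrightarrow> \<not> (?Q (ps!i) \<and> ?Q (ps ! Suc i))"
    using assms(1) by (auto simp: is_path_def cmp_adj_def)
  have ne: "ps \<noteq> []" using assms(1) by (simp add: is_path_def)
  have c1: "length (filter ?Q ps) \<le> length (filter (\<lambda>x. \<not> ?Q x) ps) + (if ?Q (hd ps) then 1 else 0)"
    using alt_count[OF nc] ne by (simp split: if_splits)
  have "distinct (filter (\<lambda>x. \<not> ?Q x) ps)" using assms(1) by (simp add: is_path_def)
  then have "length (filter (\<lambda>x. \<not> ?Q x) ps) = card (set (filter (\<lambda>x. \<not> ?Q x) ps))"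
    by (rule distinct_card[symmetric])
  also have "\<dots> \<le> card {u\<in>V. fst u \<noteq> q}"
    by (rule card_mono) (use assms(1,2) in \<open>auto simp: is_path_def\<close>)
  finally have c2: "length (filter (\<lambda>x. \<not> ?Q x) ps) \<le> m" using assms(3) by simp
  have "length (filter ?Q ps) + length (filter (\<lambda>x. \<not> ?Q x) ps) = length ps"
    by (rule sum_length_filter_compl)
  then show ?thesis using c1 c2 by (simp split: if_splits)
qed

theorem theorem1p23:
  fixes p :: nat and n :: "nat \<Rightarrow> nat" and N :: nat
  assumes "p \<ge> 2"
    and "\<And>i k. i \<le> k \<Longrightarrow> k < p \<Longrightarrow> n i \<le> n k"
    and "N = (\<Sum>i<p. n i)"
  shows "(2 * n (p - 1) \<le> N \<longrightarrow>
            detour_seq (cmp_vertices p n) cmp_adj = replicate N N)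
       \<and> (2 * n (p - 1) > N \<longrightarrow>
            detour_seq (cmp_vertices p n) cmp_adj =
              replicate (N - n (p - 1)) (2 * (N - n (p - 1)))
              @ replicate (n (p - 1)) (2 * (N - n (p - 1)) + 1))"
proof -
  define V where "V = cmp_vertices p n"
  have Vsig: "V = Sigma {..<p} (\<lambda>i. {..<n i})" unfolding V_def cmp_vertices_def by auto
  have fin: "finite V" unfolding Vsig by auto
  have cardV: "card V = N" unfolding Vsig assms(3) by simp
  define q where "q = p - 1"
  have qp: "q < p" using assms(1) q_def by simp
  define Pd where "Pd = {u\<in>V. fst u = q}"
  have Pd_eq: "Pd = (\<lambda>j. (q, j)) ` {..<n q}" unfolding Pd_def Vsig using qp by auto
  have cardP: "card Pd = n q" unfolding Pd_eq by (subst card_image) (auto simp: inj_on_def)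
  have PV: "Pd \<subseteq> V" unfolding Pd_def by auto
  have VP: "V - Pd = {u\<in>V. fst u \<noteq> q}" unfolding Pd_def by auto
  have cardVP: "card (V - Pd) = N - n q"
    using card_Diff_subset[OF finite_subset[OF PV fin] PV] cardP cardV by simp
  have ck: "card {u\<in>V. fst u = k} \<le> n q" for k
  proof (cases "k < p")
    case True
    have "{u\<in>V. fst u = k} = (\<lambda>j. (k, j)) ` {..<n k}" unfolding Vsig using True by auto
    then have "card {u\<in>V. fst u = k} \<le> n k" using card_image_le[of "{..<n k}" "\<lambda>j. (k,j)"] by simp
    also have "n k \<le> n q" using assms(2)[of k q] True q_def by simp
    finally show ?thesis .
  next
    case False
    then have "{u\<in>V. fst u = k} = {}" unfolding Vsig by auto
    then have "card {u\<in>V. fst u = k} = 0" by (simp only: card.empty)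
    then show ?thesis by simp
  qed
  have partA: "detour_seq V cmp_adj = replicate N N" if a: "2 * n q \<le> N"
  proof -
    have tauN: "tau V cmp_adj v = N" if v: "v \<in> V" for v
    proof -
      have "bal V v" unfolding bal_def
      proof
        fix k
        have "2 * card {u\<in>V. fst u = k} \<le> 2 * n q" using ck[of k] by simp
        then show "2 * card {u\<in>V. fst u = k} \<le> card V + (if fst v = k then 1 else 0)"
          using a cardV by simp
      qed
      then obtain ps where "is_path V cmp_adj ps" "hd ps = v" "length ps = N"
        using ham[OF fin cardV v] by blast
      then show ?thesis
        by (intro tau_eq[OF fin]) (use path_len_le[OF _ fin] cardV in auto)
    qed
    have "image_mset (tau V cmp_adj) (mset_set V) = image_mset (\<lambda>_. N) (mset_set V)"
      by (rule image_mset_cong) (use tauN fin in auto)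
    also have "\<dots> = replicate_mset N N" using cardV by (simp add: image_mset_const_eq)
    also have "\<dots> = mset (replicate N N)" by simp
    finally have eq: "image_mset (tau V cmp_adj) (mset_set V) = mset (replicate N N)" .
    show ?thesis unfolding detour_seq_def
      by (simp only: eq sorted_list_of_multiset_mset) (simp add: sorted_sort_id)
  qed
  have partB: "detour_seq V cmp_adj = replicate (N - n q) (2 * (N - n q)) @ replicate (n q) (2 * (N - n q) + 1)"
    if b: "2 * n q > N"
  proof -
    define m where "m = N - n q"
    have mlt: "m < n q" using b m_def by simp
    have fP: "finite Pd" using finite_subset[OF PV fin] .
    have ub: "length ps \<le> 2 * m + (if fst (hd ps) = q then 1 else 0)" if "is_path V cmp_adj ps" for ps
      using path_len_bip[OF that fin, where q=q and m=m] cardVP VP m_def by simp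
    have constr: "\<exists>ps. is_path V cmp_adj ps \<and> hd ps = v \<and> length ps = 2 * m + (if fst v = q then 1 else 0)"
      if v: "v \<in> V" and S: "S \<subseteq> Pd" "card S = m + (if fst v = q then 1 else 0)" "v \<in> Pd \<Longrightarrow> v \<in> S" for v S
    proof -
      define W where "W = (V - Pd) \<union> S"
      have fS: "finite S" using finite_subset[OF S(1) fP] .
      have fVP: "finite (V - Pd)" using fin by simp
      have fW: "finite W" unfolding W_def using fVP fS by simp
      have dj: "(V - Pd) \<inter> S = {}" using S(1) by blast
      have cW: "card W = 2 * m + (if fst v = q then 1 else 0)"
        unfolding W_def card_Un_disjoint[OF fVP fS dj] using S(2) cardVP m_def by simp
      have vW: "v \<in> W" using v S(3) unfolding W_def by blast
      have "bal W v" unfolding bal_def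
      proof
        fix k
        show "2 * card {u\<in>W. fst u = k} \<le> card W + (if fst v = k then 1 else 0)"
        proof (cases "k = q")
          case True
          have "{u\<in>W. fst u = k} = S" unfolding W_def using S(1) True Pd_def by auto
          then show ?thesis using S(2) cW True by auto
        next
          case False
          have sub: "{u\<in>W. fst u = k} \<subseteq> V - Pd" unfolding W_def using S(1) False Pd_def by auto
          have "card {u\<in>W. fst u = k} \<le> m"
            using card_mono[OF fVP sub] cardVP m_def by simp
          then show ?thesis using cW by simp
        qed
      qed
      then obtain ps where ps: "is_path W cmp_adj ps" "hd ps = v" "length ps = card W"
        using ham[OF fW refl vW] by blast
      have "W \<subseteq> V" unfolding W_def using S(1) PV by auto
      then show ?thesis using is_path_mono[OF ps(1) \<open>W \<subseteq> V\<close>] ps(2,3) cW by (intro exI[of _ ps]) simp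
    qed
    have tauv: "tau V cmp_adj v = 2 * m + (if fst v = q then 1 else 0)" if v: "v \<in> V" for v
    proof -
      obtain S where S: "S \<subseteq> Pd" "card S = m + (if fst v = q then 1 else 0)" "v \<in> Pd \<Longrightarrow> v \<in> S"
      proof (cases "fst v = q")
        case True
        then have vP: "v \<in> Pd" using v Pd_def by auto
        have "card (Pd - {v}) = n q - 1" using card_Diff_singleton_if[of Pd v] fP vP cardP by simp
        then have "m \<le> card (Pd - {v})" using mlt by simp
        then obtain T where T: "T \<subseteq> Pd - {v}" "card T = m" "finite T" by (meson obtain_subset_with_card_n)
        have vT: "v \<notin> T" using T(1) by blast
        have ci: "card (insert v T) = m + 1" using card_insert_disjoint[OF T(3) vT] T(2) by simp
        show ?thesis
        proof (rule that[of "insert v T"])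
          show "insert v T \<subseteq> Pd" using T(1) vP by blast
          show "card (insert v T) = m + (if fst v = q then 1 else 0)" using ci True by simp
          show "v \<in> insert v T" if "v \<in> Pd" by simp
        qed
      next
        case False
        then have vP: "v \<notin> Pd" using Pd_def by auto
        have "m \<le> card Pd" using cardP mlt by simp
        then obtain T where T: "T \<subseteq> Pd" "card T = m" "finite T" by (meson obtain_subset_with_card_n)
        show ?thesis
        proof (rule that[of T])
          show "T \<subseteq> Pd" using T(1) .
          show "card T = m + (if fst v = q then 1 else 0)" using T(2) False by simp
          show "v \<in> T" if "v \<in> Pd" using that vP by blast
        qed
      qed
      obtain ps where ps: "is_path V cmp_adj ps" "hd ps = v" "length ps = 2 * m + (if fst v = q then 1 else 0)"
        using constr[OF v S] by blast
      show ?thesis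
      proof (rule tau_eq[OF fin ps])
        fix ps' assume "is_path V cmp_adj ps'" "hd ps' = v"
        then show "length ps' \<le> 2 * m + (if fst v = q then 1 else 0)" using ub[of ps'] by simp
      qed
    qed
    have Vun: "V = (V - Pd) \<union> Pd" using PV by auto
    have "mset_set V = mset_set (V - Pd) + mset_set Pd"
      by (subst Vun, rule mset_set_Union) (use fin fP in auto)
    then have "image_mset (tau V cmp_adj) (mset_set V)
       = image_mset (tau V cmp_adj) (mset_set (V - Pd)) + image_mset (tau V cmp_adj) (mset_set Pd)" by simp
    also have "image_mset (tau V cmp_adj) (mset_set (V - Pd)) = image_mset (\<lambda>_. 2 * m) (mset_set (V - Pd))"
    proof (rule image_mset_cong)
      fix x assume "x \<in># mset_set (V - Pd)"
      then have "x \<in> V - Pd" using fin by simp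
      then show "tau V cmp_adj x = 2 * m" using tauv[of x] Pd_def by simp
    qed
    also have "image_mset (tau V cmp_adj) (mset_set Pd) = image_mset (\<lambda>_. 2 * m + 1) (mset_set Pd)"
    proof (rule image_mset_cong)
      fix x assume "x \<in># mset_set Pd"
      then have "x \<in> Pd" using fP by simp
      then show "tau V cmp_adj x = 2 * m + 1" using tauv[of x] Pd_def by simp
    qed
    also have "image_mset (\<lambda>_. 2 * m) (mset_set (V - Pd)) + image_mset (\<lambda>_. 2 * m + 1) (mset_set Pd)
       = mset (replicate m (2 * m) @ replicate (n q) (2 * m + 1))"
      using cardVP cardP m_def by (simp add: image_mset_const_eq)
    finally have eq: "image_mset (tau V cmp_adj) (mset_set V) = mset (replicate m (2 * m) @ replicate (n q) (2 * m + 1))" .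
    show ?thesis unfolding detour_seq_def m_def[symmetric]
      by (simp only: eq sorted_list_of_multiset_mset) (simp add: sorted_sort_id sorted_append)
  qed
  show ?thesis using partA partB unfolding V_def q_def by blast
qed

end
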